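(* Let $f\in\mathbf{SB}_n$ be nonconstant. Then $\deg(f)\ge 2^{\lceil\log_2\mathcal{AI}(f)\rceil}=2^{\lfloor\log_2(2\mathcal{AI}(f)-1)\rfloor}$.
   Context: $\mathbf{SB}_n$ is the set of symmetric Boolean functions on $n$ variables; $\deg$ is the algebraic degree. The algebraic immunity is $\mathcal{AI}(f)=\min\{\deg(g): g\neq0,\ gf=0 \text{ or } g(f+1)=0\}$. *)

theory Defs
  imports Complex_Main
begin

text \<open>A Boolean function on n variables is modelled as a predicate on subsets of
  the index set {..<n}: an input vector x in F_2^n is identified with its support
  (the set of coordinates equal to 1). Only the values on subsets of {..<n} matter.\<close>

type_synonym bfun = "nat set \<Rightarrow> bool"

text \<open>Evaluation of an algebraic normal form with coefficient predicate c
  (c S means the monomial prod_{i in S} x_i occurs) at input x, over GF(2).\<close>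
definition anf_eval :: "nat \<Rightarrow> (nat set \<Rightarrow> bool) \<Rightarrow> nat set \<Rightarrow> bool" where
  "anf_eval n c x = odd (card {S. S \<subseteq> {..<n} \<and> c S \<and> S \<subseteq> x})"

definition deg_le :: "nat \<Rightarrow> bfun \<Rightarrow> nat \<Rightarrow> bool" where
  "deg_le n f d \<longleftrightarrow> (\<exists>c. (\<forall>S. S \<subseteq> {..<n} \<and> c S \<longrightarrow> card S \<le> d) \<and>
                        (\<forall>x. x \<subseteq> {..<n} \<longrightarrow> f x = anf_eval n c x))"

definition bdeg :: "nat \<Rightarrow> bfun \<Rightarrow> nat" where
  "bdeg n f = (LEAST d. deg_le n f d)"

definition nonzero_bf :: "nat \<Rightarrow> bfun \<Rightarrow> bool" where
  "nonzero_bf n g \<longleftrightarrow> (\<exists>x. x \<subseteq> {..<n} \<and> g x)"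

definition prod_zero :: "nat \<Rightarrow> bfun \<Rightarrow> bfun \<Rightarrow> bool" where
  "prod_zero n g h \<longleftrightarrow> (\<forall>x. x \<subseteq> {..<n} \<longrightarrow> \<not> (g x \<and> h x))"

definition AI :: "nat \<Rightarrow> bfun \<Rightarrow> nat" where
  "AI n f = (LEAST d. \<exists>g. nonzero_bf n g \<and> bdeg n g = d \<and>
                          (prod_zero n g f \<or> prod_zero n g (\<lambda>x. \<not> f x)))"

definition symmetric_bf :: "nat \<Rightarrow> bfun \<Rightarrow> bool" where
  "symmetric_bf n f \<longleftrightarrow> (\<forall>x y. x \<subseteq> {..<n} \<and> y \<subseteq> {..<n} \<and> card x = card y \<longrightarrow> f x = f y)"

definition nonconstant_bf :: "nat \<Rightarrow> bfun \<Rightarrow> bool" where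
  "nonconstant_bf n f \<longleftrightarrow> (\<exists>x y. x \<subseteq> {..<n} \<and> y \<subseteq> {..<n} \<and> f x \<noteq> f y)"

end

theory Submission imports Defs begin
definition cube :: "nat set \<Rightarrow> nat set \<Rightarrow> nat set set" where
  "cube A B = {z. A \<subseteq> z \<and> z \<subseteq> B}"

lemma finite_cube: "finite B \<Longrightarrow> finite (cube A B)"
  unfolding cube_def by (rule finite_subset[of _ "Pow B"]) auto

lemma cube_image: "A \<subseteq> B \<Longrightarrow> cube A B = (\<lambda>y. A \<union> y) ` Pow (B - A)"
  unfolding cube_def by (auto simp: image_def)

lemma inj_union: "inj_on (\<lambda>y. A \<union> y) (Pow (B - A))"
  by (auto simp: inj_on_def)

lemma card_cube: "finite B \<Longrightarrow> A \<subseteq> B \<Longrightarrow> card (cube A B) = 2 ^ card (B - A)"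
  by (simp add: cube_image card_image[OF inj_union] card_Pow)

lemma sym_count:
  assumes "finite B" "A \<subseteq> B" "\<And>z. z \<in> cube A B \<Longrightarrow> g z = G (card z)"
  shows "card {z\<in>cube A B. g z} =
    (\<Sum>j\<le>card (B - A). if G (card A + j) then card (B - A) choose j else 0)"
proof -
  let ?R = "B - A"
  have fA: "finite A" using assms finite_subset by blast
  have fR: "finite ?R" using assms by simp
  have "{z\<in>cube A B. g z} = (\<lambda>y. A \<union> y) ` {y. y \<subseteq> ?R \<and> G (card A + card y)}"
  proof -
    have "{z\<in>cube A B. g z} = (\<lambda>y. A \<union> y) ` {y\<in>Pow ?R. g (A \<union> y)}"
      using cube_image[OF assms(2)] by auto
    also have "{y\<in>Pow ?R. g (A \<union> y)} = {y. y \<subseteq> ?R \<and> G (card A + card y)}"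
    proof -
      { fix y assume y: "y \<subseteq> ?R"
        hence "A \<union> y \<in> cube A B" using assms(2) by (auto simp: cube_def)
        hence "g (A \<union> y) = G (card (A \<union> y))" using assms(3) by blast
        moreover have "card (A \<union> y) = card A + card y"
          using y fA fR by (subst card_Un_disjoint) (auto intro: finite_subset)
        ultimately have "g (A \<union> y) = G (card A + card y)" by simp }
      thus ?thesis by auto
    qed
    finally show ?thesis .
  qed
  hence "card {z\<in>cube A B. g z} = card {y. y \<subseteq> ?R \<and> G (card A + card y)}"
    by (metis (no_types, lifting) card_image inj_on_subset[OF inj_union[of A B]] Pow_iff mem_Collect_eq subsetI)
  also have "{y. y \<subseteq> ?R \<and> G (card A + card y)} =
     (\<Union>j\<in>{j. j \<le> card ?R \<and> G (card A + j)}. {y. y \<subseteq> ?R \<and> card y = j})"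
    using fR by (auto intro: card_mono)
  also have "card \<dots> = (\<Sum>j\<in>{j. j \<le> card ?R \<and> G (card A + j)}. card {y. y \<subseteq> ?R \<and> card y = j})"
    by (rule card_UN_disjoint) (auto intro: finite_subset[of _ "Pow ?R"] fR)
  also have "\<dots> = (\<Sum>j\<in>{j. j \<le> card ?R \<and> G (card A + j)}. card ?R choose j)"
    using n_subsets[OF fR] by simp
  also have "\<dots> = (\<Sum>j\<le>card ?R. if G (card A + j) then card ?R choose j else 0)"
    by (simp add: sum.If_cases Collect_conj_eq atMost_def Int_commute)
  finally show ?thesis .
qed
lemma pow2_choose_even:
  assumes "0 < j" "j < 2^k" shows "even ((2::nat)^k choose j)"
proof (rule ccontr)
  assume o: "odd ((2::nat)^k choose j)"
  have "j * (2^k choose j) = 2^k * ((2^k - 1) choose (j - 1))"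
    using times_binomial_minus1_eq[OF assms(1)] by simp
  hence "(2::nat)^k dvd j * (2^k choose j)" by simp
  moreover have "coprime ((2::nat)^k) (2^k choose j)" using o
    by simp
  ultimately have "(2::nat)^k dvd j" using coprime_dvd_mult_left_iff by blast
  with assms show False by (simp add: nat_dvd_not_less)
qed

lemma sym_pow2:
  assumes "finite B" "A \<subseteq> B" "card (B - A) = 2^k" "\<And>z. z \<in> cube A B \<Longrightarrow> g z = G (card z)"
  shows "even (card {z\<in>cube A B. g z}) \<longleftrightarrow> (G (card A) \<longleftrightarrow> G (card A + 2^k))"
proof -
  define N :: nat where "N = 2^k"
  have N1: "N \<ge> 1" by (simp add: N_def)
  define h where "h = (\<lambda>j. if G (card A + j) then N choose j else 0)"
  have "card {z\<in>cube A B. g z} = (\<Sum>j\<le>N. h j)"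
    using sym_count[of B A g G, OF assms(1,2) assms(4)] unfolding assms(3) h_def N_def .
  also have "\<dots> = (\<Sum>j\<in>{0,N}. h j) + (\<Sum>j\<in>{..N} - {0,N}. h j)"
    by (subst sum.subset_diff[of "{0,N}"]) auto
  also have "(\<Sum>j\<in>{0,N}. h j) = h 0 + h N" using N1 by simp
  finally have eq: "card {z\<in>cube A B. g z} = h 0 + h N + (\<Sum>j\<in>{..N} - {0,N}. h j)" .
  have ev: "even (\<Sum>j\<in>{..N} - {0,N}. h j)"
  proof (rule dvd_sum)
    fix j assume "j \<in> {..N} - {0,N}"
    hence "0 < j" "j < 2^k" by (auto simp: N_def)
    thus "even (h j)" using pow2_choose_even by (simp add: h_def N_def)
  qed
  show ?thesis unfolding eq using ev by (simp add: h_def N_def)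
qed
lemma cube_split:
  assumes "finite B" "A \<subseteq> B" "i \<in> B" "i \<notin> A"
  shows "card {z\<in>cube A B. g z} = card {z\<in>cube A (B - {i}). g z} + card {z\<in>cube (insert i A) B. g z}"
proof -
  have "{z\<in>cube A B. g z} = {z\<in>cube A (B - {i}). g z} \<union> {z\<in>cube (insert i A) B. g z}"
    using assms by (auto simp: cube_def)
  moreover have "finite (cube A (B - {i}))" "finite (cube (insert i A) B)"
    using assms finite_cube by auto
  moreover have "finite {z\<in>cube A (B - {i}). g z}" "finite {z\<in>cube (insert i A) B. g z}"
    using calculation(2,3) by auto
  ultimately show ?thesis
    by (subst card_Un_disjoint[symmetric]) (auto simp: cube_def)
qed

lemma double_count:
  assumes "finite X" "finite Y"
  shows "(\<Sum>x\<in>X. card {y\<in>Y. R x y}) = (\<Sum>y\<in>Y. card {x\<in>X. R x y})"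
proof -
  have "(\<Sum>x\<in>X. card {y\<in>Y. R x y}) = (\<Sum>x\<in>X. \<Sum>y\<in>Y. if R x y then 1 else 0)"
    using assms by (simp add: sum.If_cases Int_def)
  also have "\<dots> = (\<Sum>y\<in>Y. \<Sum>x\<in>X. if R x y then 1 else 0)" by (rule sum.swap)
  also have "\<dots> = (\<Sum>y\<in>Y. card {x\<in>X. R x y})"
    using assms by (simp add: sum.If_cases Int_def)
  finally show ?thesis .
qed

lemma anf_even:
  assumes "deg_le n g d" "A \<subseteq> B" "B \<subseteq> {..<n}" "d < card (B - A)"
  shows "even (card {z\<in>cube A B. g z})"
proof -
  obtain c where c1: "\<And>S. S \<subseteq> {..<n} \<Longrightarrow> c S \<Longrightarrow> card S \<le> d"
    and c2: "\<And>x. x \<subseteq> {..<n} \<Longrightarrow> g x = anf_eval n c x"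
    using assms(1) unfolding deg_le_def by blast
  define M where "M = {S. S \<subseteq> {..<n} \<and> c S}"
  have fM: "finite M" unfolding M_def by (rule finite_subset[of _ "Pow {..<n}"]) auto
  have fB: "finite B" using assms(3) finite_subset by blast
  have fC: "finite (cube A B)" using finite_cube[OF fB] .
  have gz: "g z = odd (card {S\<in>M. S \<subseteq> z})" if "z \<in> cube A B" for z
  proof -
    have "z \<subseteq> {..<n}" using that assms(3) by (auto simp: cube_def)
    thus ?thesis using c2 by (simp add: anf_eval_def M_def conj_assoc)
  qed
  have "{z\<in>cube A B. g z} = {z\<in>cube A B. odd (card {S\<in>M. S \<subseteq> z})}"
    using gz by auto
  hence "even (card {z\<in>cube A B. g z}) \<longleftrightarrow> even (\<Sum>z\<in>cube A B. card {S\<in>M. S \<subseteq> z})"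
    using even_sum_iff[OF fC, of "\<lambda>z. card {S\<in>M. S \<subseteq> z}"] by simp
  also have "(\<Sum>z\<in>cube A B. card {S\<in>M. S \<subseteq> z}) = (\<Sum>S\<in>M. card {z\<in>cube A B. S \<subseteq> z})"
    by (rule double_count[OF fC fM])
  finally have eq: "even (card {z\<in>cube A B. g z}) \<longleftrightarrow> even (\<Sum>S\<in>M. card {z\<in>cube A B. S \<subseteq> z})" .
  have "even (\<Sum>S\<in>M. card {z\<in>cube A B. S \<subseteq> z})"
  proof (rule dvd_sum)
    fix S assume S: "S \<in> M"
    show "even (card {z\<in>cube A B. S \<subseteq> z})"
    proof (cases "S \<subseteq> B")
      case False
      have "{z\<in>cube A B. S \<subseteq> z} = {}" using False by (auto simp: cube_def)
      thus ?thesis by (simp only: card.empty even_zero)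
    next
      case True
      hence e: "{z\<in>cube A B. S \<subseteq> z} = cube (A \<union> S) B" by (auto simp: cube_def)
      have "card S \<le> d" using S c1 by (auto simp: M_def)
      moreover have "card (B - A) \<le> card (B - (A \<union> S)) + card S"
      proof -
        have "B - A \<subseteq> (B - (A \<union> S)) \<union> S" by auto
        hence "card (B - A) \<le> card ((B - (A \<union> S)) \<union> S)"
          using fB True by (intro card_mono) (auto intro: finite_subset)
        also have "\<dots> \<le> card (B - (A \<union> S)) + card S" by (rule card_Un_le)
        finally show ?thesis .
      qed
      ultimately have "card (B - (A \<union> S)) > 0" using assms(4) by linarith
      thus ?thesis unfolding e using card_cube[OF fB] True assms(2)
        by (simp add: dvd_power)
    qed
  qed
  with eq show ?thesis by simp
qed

lemma moebius:
  assumes "\<And>S. S \<subseteq> {..<n} \<Longrightarrow> d < card S \<Longrightarrow> even (card {z\<in>cube {} S. g z})"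
  shows "deg_le n g d"
  unfolding deg_le_def
proof (intro exI conjI allI impI)
  define c where "c = (\<lambda>S. odd (card {z\<in>cube {} S. g z}))"
  show "card S \<le> d" if "S \<subseteq> {..<n} \<and> c S" for S
  proof (rule ccontr)
    assume "\<not> card S \<le> d"
    hence "even (card {z\<in>cube {} S. g z})" using that assms[of S] by simp
    thus False using that unfolding c_def by simp
  qed
  fix x assume x: "x \<subseteq> {..<n}"
  have fx: "finite x" using x finite_subset by blast
  have fC: "finite (cube {} x)" using finite_cube[OF fx] .
  have "{S. S \<subseteq> {..<n} \<and> c S \<and> S \<subseteq> x} = {S\<in>cube {} x. odd (card {z\<in>cube {} x. g z \<and> z \<subseteq> S})}"
  proof -
    have "{z\<in>cube {} S. g z} = {z\<in>cube {} x. g z \<and> z \<subseteq> S}" if "S \<subseteq> x" for S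
      using that by (auto simp: cube_def)
    thus ?thesis using x by (auto simp: c_def cube_def)
  qed
  hence "anf_eval n c x \<longleftrightarrow> odd (\<Sum>S\<in>cube {} x. card {z\<in>cube {} x. g z \<and> z \<subseteq> S})"
    unfolding anf_eval_def using even_sum_iff[OF fC, of "\<lambda>S. card {z\<in>cube {} x. g z \<and> z \<subseteq> S}"] by simp
  also have "(\<Sum>S\<in>cube {} x. card {z\<in>cube {} x. g z \<and> z \<subseteq> S}) = (\<Sum>z\<in>cube {} x. card {S\<in>cube {} x. g z \<and> z \<subseteq> S})"
    by (rule double_count[OF fC fC])
  also have "\<dots> = (\<Sum>z\<in>cube {} x. if g z then 2 ^ card (x - z) else 0)"
  proof (rule sum.cong[OF refl])
    fix z assume z: "z \<in> cube {} x"
    have "{S\<in>cube {} x. g z \<and> z \<subseteq> S} = (if g z then cube z x else {})"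
      by (auto simp: cube_def)
    thus "card {S\<in>cube {} x. g z \<and> z \<subseteq> S} = (if g z then 2 ^ card (x - z) else 0)"
      using card_cube[OF fx, of z] z by (auto simp: cube_def)
  qed
  finally have E: "anf_eval n c x \<longleftrightarrow> odd (\<Sum>z\<in>cube {} x. if g z then 2 ^ card (x - z) else 0::nat)" .
  have E2: "odd (\<Sum>z\<in>cube {} x. if g z then 2 ^ card (x - z) else 0::nat) \<longleftrightarrow> odd (card {z\<in>cube {} x. odd (if g z then 2 ^ card (x - z) else 0::nat)})"
    using even_sum_iff[OF fC, of "\<lambda>z. if g z then 2 ^ card (x - z) else 0::nat"] by simp
  have E3: "{z\<in>cube {} x. odd (if g z then 2 ^ card (x - z) else 0::nat)} = (if g x then {x} else {})"
  proof -
    have "odd (if g z then 2 ^ card (x - z) else 0::nat) \<longleftrightarrow> g z \<and> z = x" if "z \<subseteq> x" for z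
    proof -
      have "card (x - z) = 0 \<longleftrightarrow> z = x" using that fx by (auto intro: finite_subset)
      thus ?thesis by auto
    qed
    hence "z \<in> {z\<in>cube {} x. odd (if g z then 2 ^ card (x - z) else 0::nat)} \<longleftrightarrow> z \<in> (if g x then {x} else {})" for z
      unfolding cube_def by (cases "z \<subseteq> x") auto
    thus ?thesis by (rule set_eqI)
  qed
  show "g x = anf_eval n c x" unfolding E E2 E3 by simp
qed
lemma sym_deg_key:
  assumes h: "h = 2^k" and per: "(\<forall>a. G (a + h) = G a) \<or> (\<forall>a. G (a + h) = (\<not> G a))"
  shows "A \<subseteq> B \<Longrightarrow> B \<subseteq> {..<n} \<Longrightarrow> card (B - A) = m \<Longrightarrow> h < m \<Longrightarrow>
      even (card {z\<in>cube A B. G (card z)})"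
  proof (induction m arbitrary: A B)
    case 0 thus ?case by simp
  next
    case (Suc m)
    have fB: "finite B" using Suc.prems(2) finite_subset by blast
    have "B - A \<noteq> {}" using Suc.prems(3) by (metis card.empty nat.distinct(1))
    then obtain i where i: "i \<in> B" "i \<notin> A" by auto
    have fA: "finite A" using Suc.prems(1) fB finite_subset by blast
    have iBA: "i \<in> B - A" using i by simp
    have cc: "card ((B - A) - {i}) = m"
      using card_Diff_singleton[OF iBA] Suc.prems(3) by simp
    have "(B - {i}) - A = (B - A) - {i}" by auto
    hence c1: "card ((B - {i}) - A) = m" using cc by simp
    have "B - insert i A = (B - A) - {i}" by auto
    hence c2: "card (B - insert i A) = m" using cc by simp
    have sp: "card {z\<in>cube A B. G (card z)} = card {z\<in>cube A (B - {i}). G (card z)} + card {z\<in>cube (insert i A) B. G (card z)}"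
      by (rule cube_split[OF fB Suc.prems(1) i])
    show ?case
    proof (cases "h < m")
      case True
      have s1: "A \<subseteq> B - {i}" "B - {i} \<subseteq> {..<n}" using Suc.prems(1,2) i by auto
      have s2: "insert i A \<subseteq> B" using Suc.prems(1) i by auto
      have "even (card {z\<in>cube A (B - {i}). G (card z)})"
        by (rule Suc.IH[OF s1 c1 True])
      moreover have "even (card {z\<in>cube (insert i A) B. G (card z)})"
        by (rule Suc.IH[OF s2 Suc.prems(2) c2 True])
      ultimately show ?thesis using sp by simp
    next
      case False
      hence m: "m = h" using Suc.prems(4) by simp
      have e1: "even (card {z\<in>cube A (B - {i}). G (card z)}) \<longleftrightarrow> (G (card A) \<longleftrightarrow> G (card A + h))"
      proof -
        have "finite (B - {i})" "A \<subseteq> B - {i}" "card ((B - {i}) - A) = 2^k"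
          using fB Suc.prems(1) i c1 m h by auto
        from sym_pow2[of "B - {i}" A k "\<lambda>z. G (card z)" G, OF this] show ?thesis using h by simp
      qed
      have e2: "even (card {z\<in>cube (insert i A) B. G (card z)}) \<longleftrightarrow> (G (card A + 1) \<longleftrightarrow> G (card A + 1 + h))"
      proof -
        have "insert i A \<subseteq> B" "card (B - insert i A) = 2^k"
          using Suc.prems(1) i c2 m h by auto
        from sym_pow2[of B "insert i A" k "\<lambda>z. G (card z)" G, OF fB this] show ?thesis
          using h fA i(2) by simp
      qed
      have "(G (card A) \<longleftrightarrow> G (card A + h)) \<longleftrightarrow> (G (card A + 1) \<longleftrightarrow> G (card A + 1 + h))"
      proof -
        { assume "\<forall>a. G (a + h) = G a"
          hence "G (card A + h) = G (card A)" "G (card A + 1 + h) = G (card A + 1)" by blast+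
          hence ?thesis by simp }
        moreover
        { assume "\<forall>a. G (a + h) = (\<not> G a)"
          hence "G (card A + h) = (\<not> G (card A))" "G (card A + 1 + h) = (\<not> G (card A + 1))" by blast+
          hence ?thesis by simp }
        ultimately show ?thesis using per by blast
      qed
      thus ?thesis unfolding sp even_add e1 e2 .
    qed
  qed

lemma sym_deg:
  assumes h: "h = 2^k" and per: "(\<forall>a. G (a + h) = G a) \<or> (\<forall>a. G (a + h) = (\<not> G a))"
  shows "deg_le n (\<lambda>x. G (card x)) h"
proof (rule moebius)
  fix S assume "S \<subseteq> {..<n}" "h < card S"
  thus "even (card {z\<in>cube {} S. G (card z)})" using sym_deg_key[OF h per, of "{}" S n "card S"] by simp
qed
lemma log_L1:
  assumes "1 \<le> a" "a \<le> (2::nat)^t"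
  shows "nat \<lceil>log 2 (real a)\<rceil> \<le> t"
proof (cases "a = 1")
  case True thus ?thesis by simp
next
  case False
  then obtain k where k: "2^k < a" "a \<le> (2::nat)^(k+1)" using ex_power_ivl2[of 2 a] assms by auto
  have "\<lceil>log (real 2) (real a)\<rceil> = int k + 1" by (rule ceiling_log_nat_eq_if[OF k]) simp
  moreover have "k < t" using k assms(2)
    by (metis less_le_trans nat_power_less_imp_less zero_less_numeral)
  ultimately show ?thesis by simp
qed

lemma log_L2:
  assumes "1 \<le> a"
  shows "nat \<lceil>log 2 (real a)\<rceil> = nat \<lfloor>log 2 (2 * real a - 1)\<rfloor>"
proof (cases "a = 1")
  case True thus ?thesis by simp
next
  case False
  then obtain k where k: "2^k < a" "a \<le> (2::nat)^(k+1)" using ex_power_ivl2[of 2 a] assms by auto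
  have "\<lceil>log (real 2) (real a)\<rceil> = int k + 1" by (rule ceiling_log_nat_eq_if[OF k]) simp
  moreover have "\<lfloor>log (real 2) (real (2*a - 1))\<rfloor> = int (k+1)"
    by (rule floor_log_nat_eq_if) (use k in auto)
  moreover have "real (2*a - 1) = 2 * real a - 1" using assms by simp
  ultimately show ?thesis by simp
qed

lemma card_le_n: "x \<subseteq> {..<n} \<Longrightarrow> card x \<le> n"
  using card_mono[of "{..<n}" x] by simp

lemma deg_le_n: "deg_le n g n"
  by (rule moebius) (use card_le_n not_le in blast)

lemma bdeg_spec: "deg_le n g (bdeg n g)"
  unfolding bdeg_def by (rule LeastI[of _ n]) (rule deg_le_n)

lemma deg0_const:
  assumes "deg_le n g 0" "x \<subseteq> {..<n}" "y \<subseteq> {..<n}"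
  shows "g x = g y"
proof -
  obtain c where c1: "\<And>S. S \<subseteq> {..<n} \<Longrightarrow> c S \<Longrightarrow> card S \<le> 0"
    and c2: "\<And>x. x \<subseteq> {..<n} \<Longrightarrow> g x = anf_eval n c x"
    using assms(1) unfolding deg_le_def by blast
  have "{S. S \<subseteq> {..<n} \<and> c S \<and> S \<subseteq> z} = (if c {} then {{}} else {})" if "z \<subseteq> {..<n}" for z
  proof -
    have "S \<subseteq> {..<n} \<Longrightarrow> c S \<Longrightarrow> S = {}" for S
      using c1[of S] by (meson card_0_eq finite_lessThan finite_subset le_zero_eq)
    thus ?thesis by auto
  qed
  thus ?thesis using c2 assms(2,3) by (simp add: anf_eval_def)
qed
theorem corollary8:
  fixes n :: nat and f :: bfun
  assumes "symmetric_bf n f" and "nonconstant_bf n f"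
  shows "bdeg n f \<ge> 2 ^ nat \<lceil>log 2 (real (AI n f))\<rceil>
    \<and> (2::nat) ^ nat \<lceil>log 2 (real (AI n f))\<rceil>
        = 2 ^ nat \<lfloor>log 2 (2 * real (AI n f) - 1)\<rfloor>"
proof -
  define D where "D = bdeg n f"
  have dD: "deg_le n f D" unfolding D_def by (rule bdeg_spec)
  obtain x0 y0 where xy: "x0 \<subseteq> {..<n}" "y0 \<subseteq> {..<n}" "f x0 \<noteq> f y0"
    using assms(2) unfolding nonconstant_bf_def by blast
  have D1: "D \<ge> 1"
  proof (rule ccontr)
    assume "\<not> D \<ge> 1" hence "D = 0" by simp
    thus False using deg0_const[of n f x0 y0] dD xy by simp
  qed
  obtain t where t: "2^t \<le> D" "D < (2::nat)^(t+1)" using ex_power_ivl1[of 2 D] D1 by auto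
  define h :: nat where "h = 2^t"
  have h1: "h \<ge> 1" by (simp add: h_def)
  define F where "F = (\<lambda>w. f {..<w})"
  have fF: "f x = F (card x)" if "x \<subseteq> {..<n}" for x
  proof -
    have "card x \<le> n" using that by (rule card_le_n)
    hence "x \<subseteq> {..<n} \<and> {..<card x} \<subseteq> {..<n} \<and> card x = card {..<card x}" using that by auto
    thus ?thesis using assms(1) unfolding symmetric_bf_def F_def by blast
  qed
  have period: "F a = F (a + 2*h)" if "a + 2*h \<le> n" for a
  proof -
    have sub: "{..<a} \<subseteq> {..<a + 2*h}" "{..<a + 2*h} \<subseteq> {..<n}" using that by auto
    have cd: "card ({..<a + 2*h} - {..<a}) = 2^(t+1)" by (simp add: h_def)
    have "even (card {z\<in>cube {..<a} {..<a + 2*h}. f z})"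
      using anf_even[OF dD sub] cd t by simp
    moreover have "\<And>z. z \<in> cube {..<a} {..<a + 2*h} \<Longrightarrow> f z = F (card z)"
    proof -
      fix z assume "z \<in> cube {..<a} {..<a + 2*h}"
      hence "z \<subseteq> {..<n}" using sub(2) by (auto simp: cube_def)
      thus "f z = F (card z)" by (rule fF)
    qed
    ultimately show ?thesis
      using sym_pow2[of "{..<a + 2*h}" "{..<a}" "t+1" f F] sub cd by (simp add: h_def)
  qed
  have perq: "F (r + 2*h*q) = F r" if "r + 2*h*q \<le> n" for r q
    using that
  proof (induction q)
    case 0 thus ?case by simp
  next
    case (Suc q)
    have "F (r + 2*h*q) = F (r + 2*h*q + 2*h)" using period[of "r + 2*h*q"] Suc.prems by simp
    also have "r + 2*h*q + 2*h = r + 2*h*Suc q" by simp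
    finally show ?case using Suc by simp
  qed
  have per2: "F w = (if even (w div h) then F (w mod h) else F (w mod h + h))" if "w \<le> n" for w
  proof -
    have "w = w mod (2*h) + 2*h*(w div (2*h))" by simp
    hence "F w = F (w mod (2*h))" using perq[of "w mod (2*h)" "w div (2*h)"] that by simp
    moreover have "w mod (2*h) = h * (w div h mod 2) + w mod h"
      using mod_mult2_eq[of w h 2] by (simp add: mult.commute)
    ultimately show ?thesis by (auto simp: even_iff_mod_2_eq_zero odd_iff_mod_2_eq_one add.commute)
  qed
  have mod_le: "w mod h + h \<le> w" if "odd (w div h)" for w
  proof -
    have "w div h \<ge> 1" using that by (cases "w div h") auto
    hence "h * 1 \<le> h * (w div h)" by (intro mult_le_mono2)
    moreover have "w = h * (w div h) + w mod h" by simp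
    ultimately show ?thesis by linarith
  qed
  obtain g where g: "nonzero_bf n g" "deg_le n g h" "prod_zero n g f \<or> prod_zero n g (\<lambda>x. \<not> f x)"
  proof (cases "\<exists>u<h. u + h \<le> n \<and> F u = F (u + h)")
    case True
    then obtain u where u: "u < h" "u + h \<le> n" "F u = F (u + h)" by blast
    define G where "G = (\<lambda>w. w mod h = u)"
    have degG: "deg_le n (\<lambda>x. G (card x)) h"
      by (rule sym_deg[of h t]) (auto simp: h_def G_def)
    have Gv: "F w = F u" if "w \<le> n" "G w" for w
      using per2[OF that(1)] that u by (auto simp: G_def split: if_splits)
    have nz: "nonzero_bf n (\<lambda>x. G (card x))"
      unfolding nonzero_bf_def using u by (intro exI[of _ "{..<u}"]) (auto simp: G_def)
    have ann: "prod_zero n (\<lambda>x. G (card x)) f \<or> prod_zero n (\<lambda>x. G (card x)) (\<lambda>x. \<not> f x)"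
    proof -
      have "\<not> (G (card x) \<and> f x \<noteq> F u)" if x: "x \<subseteq> {..<n}" for x
      proof -
        have cx: "card x \<le> n" using x by (rule card_le_n)
        show ?thesis using Gv[OF cx] fF[OF x] by auto
      qed
      thus ?thesis unfolding prod_zero_def by (cases "F u") auto
    qed
    show ?thesis by (rule that[OF nz degG ann])
  next
    case False
    hence diff: "\<And>u. u < h \<Longrightarrow> u + h \<le> n \<Longrightarrow> F u \<noteq> F (u + h)" by blast
    define G where "G = (\<lambda>w. F (w mod h) \<longleftrightarrow> even (w div h))"
    have shift: "G (a + h) = (\<not> G a)" for a
    proof -
      have "(a + h) mod h = a mod h" by simp
      moreover have "(a + h) div h = a div h + 1" using h1 by simp
      ultimately show ?thesis by (simp add: G_def)
    qed
    have degG: "deg_le n (\<lambda>x. G (card x)) h"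
      by (rule sym_deg[of h t]) (use shift in \<open>auto simp: h_def\<close>)
    have Gv: "F w" if "w \<le> n" "G w" for w
    proof (cases "even (w div h)")
      case True thus ?thesis using per2[OF that(1)] that(2) by (simp add: G_def)
    next
      case False
      have "w mod h < h" using h1 by simp
      moreover have "w mod h + h \<le> n" using mod_le[OF False] that(1) by simp
      ultimately have "F (w mod h) \<noteq> F (w mod h + h)" using diff by blast
      thus ?thesis using per2[OF that(1)] that(2) False by (simp add: G_def)
    qed
    obtain w where w: "w \<le> n" "F w"
    proof -
      have "card x0 \<le> n" "card y0 \<le> n" using xy by (simp_all add: card_le_n)
      moreover have "F (card x0) \<or> F (card y0)" using xy fF by auto
      ultimately show ?thesis using that by blast
    qed
    have "G w"
    proof (cases "even (w div h)")
      case True thus ?thesis using per2[OF w(1)] w(2) by (simp add: G_def)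
    next
      case False
      have "w mod h < h" using h1 by simp
      moreover have "w mod h + h \<le> n" using mod_le[OF False] w(1) by simp
      ultimately have "F (w mod h) \<noteq> F (w mod h + h)" using diff by blast
      thus ?thesis using per2[OF w(1)] w(2) False by (simp add: G_def)
    qed
    hence nz: "nonzero_bf n (\<lambda>x. G (card x))"
      unfolding nonzero_bf_def using w by (intro exI[of _ "{..<w}"]) auto
    have ann: "prod_zero n (\<lambda>x. G (card x)) (\<lambda>x. \<not> f x)"
      unfolding prod_zero_def
    proof (intro allI impI)
      fix x assume x: "x \<subseteq> {..<n}"
      have cx: "card x \<le> n" using x by (rule card_le_n)
      show "\<not> (G (card x) \<and> \<not> f x)" using Gv[OF cx] fF[OF x] by auto
    qed
    show ?thesis by (rule that[OF nz degG]) (use ann in simp)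
  qed
  define P where "P = (\<lambda>d. \<exists>g. nonzero_bf n g \<and> bdeg n g = d \<and>
                          (prod_zero n g f \<or> prod_zero n g (\<lambda>x. \<not> f x)))"
  have AIdef: "AI n f = (LEAST d. P d)" unfolding AI_def P_def ..
  have Pg: "P (bdeg n g)" unfolding P_def by (rule exI[of _ g]) (use g(1,3) in simp)
  have "bdeg n g \<le> h" unfolding bdeg_def by (rule Least_le) (rule g(2))
  moreover have "AI n f \<le> bdeg n g" unfolding AIdef by (rule Least_le) (rule Pg)
  ultimately have AIh: "AI n f \<le> 2^t" by (simp add: h_def)
  have AI1: "AI n f \<ge> 1"
  proof (rule ccontr)
    assume "\<not> AI n f \<ge> 1" hence A0: "AI n f = 0" by simp
    have "P (AI n f)" unfolding AIdef by (rule LeastI[of _ "bdeg n g"]) (rule Pg)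
    hence "P 0" using A0 by simp
    then obtain g' where g': "nonzero_bf n g'" "bdeg n g' = 0"
      "prod_zero n g' f \<or> prod_zero n g' (\<lambda>x. \<not> f x)" unfolding P_def by blast
    have d0: "deg_le n g' 0" using bdeg_spec[of n g'] g'(2) by simp
    obtain z where z: "z \<subseteq> {..<n}" "g' z" using g'(1) unfolding nonzero_bf_def by blast
    have "g' x0" "g' y0" using deg0_const[OF d0 z(1)] z(2) xy(1,2) by auto
    show False using g'(3)
    proof
      assume "prod_zero n g' f"
      hence "\<not> f x0" "\<not> f y0" using xy(1,2) \<open>g' x0\<close> \<open>g' y0\<close> unfolding prod_zero_def by auto
      thus False using xy(3) by simp
    next
      assume "prod_zero n g' (\<lambda>x. \<not> f x)"
      hence "f x0" "f y0" using xy(1,2) \<open>g' x0\<close> \<open>g' y0\<close> unfolding prod_zero_def by auto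
      thus False using xy(3) by simp
    qed
  qed
  have "nat \<lceil>log 2 (real (AI n f))\<rceil> \<le> t" by (rule log_L1[OF AI1 AIh])
  hence "(2::nat) ^ nat \<lceil>log 2 (real (AI n f))\<rceil> \<le> 2^t" by (intro power_increasing) auto
  with t(1) have "bdeg n f \<ge> 2 ^ nat \<lceil>log 2 (real (AI n f))\<rceil>" unfolding D_def by linarith
  moreover have "(2::nat) ^ nat \<lceil>log 2 (real (AI n f))\<rceil> = 2 ^ nat \<lfloor>log 2 (2 * real (AI n f) - 1)\<rfloor>"
    using log_L2[OF AI1] by simp
  ultimately show ?thesis by blast
qed
end
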